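(* Let $H$ be a finite group, $p$ a prime, and $S$ a Sylow $p$-subgroup of $H$. If $Z(S) \leq O_{p',p}(H)$, then $Z(S)$ splits over $W_H(S)$, i.e., there is a subgroup $K \leq Z(S)$ with $Z(S) = W_H(S) \times K$.
   Context: For a finite group $G$ with Sylow $p$-subgroup $S$, an element $x \in S$ is weakly closed in $S$ with respect to $G$ if $x^g = x$ whenever $g \in G$ and $x^g := g^{-1}xg \in S$. $W_G(S)$ denotes the subgroup of all elements of $S$ that are weakly closed in $S$ with respect to $G$. $O_{p'}(H)$ is the largest normal $p'$-subgroup of $H$, and $O_{p',p}(H)$ is the normal subgroup of $H$ containing $O_{p'}(H)$ with $O_{p',p}(H)/O_{p'}(H) = O_p(H/O_{p'}(H))$, where $O_p$ denotes the largest normal $p$-subgroup. *)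

theory Defs
  imports "HOL-Algebra.Algebra"
begin

definition sylow_subgroup :: "('a, 'b) monoid_scheme \<Rightarrow> nat \<Rightarrow> 'a set \<Rightarrow> bool" where
  "sylow_subgroup G p S \<longleftrightarrow> subgroup S G \<and> card S = p ^ multiplicity p (order G)"

definition centre :: "('a, 'b) monoid_scheme \<Rightarrow> 'a set \<Rightarrow> 'a set" where
  "centre G S = {z \<in> S. \<forall>x \<in> S. z \<otimes>\<^bsub>G\<^esub> x = x \<otimes>\<^bsub>G\<^esub> z}"

definition weakly_closed :: "('a, 'b) monoid_scheme \<Rightarrow> 'a set \<Rightarrow> 'a \<Rightarrow> bool" where
  "weakly_closed G S x \<longleftrightarrow> x \<in> S \<and>
     (\<forall>g \<in> carrier G. inv\<^bsub>G\<^esub> g \<otimes>\<^bsub>G\<^esub> x \<otimes>\<^bsub>G\<^esub> g \<in> S \<longrightarrow> inv\<^bsub>G\<^esub> g \<otimes>\<^bsub>G\<^esub> x \<otimes>\<^bsub>G\<^esub> g = x)"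

definition W :: "('a, 'b) monoid_scheme \<Rightarrow> 'a set \<Rightarrow> 'a set" where
  "W G S = {x \<in> S. weakly_closed G S x}"

definition largest_normal :: "('a, 'b) monoid_scheme \<Rightarrow> ('a set \<Rightarrow> bool) \<Rightarrow> 'a set" where
  "largest_normal G P = (THE N. N \<lhd> G \<and> P N \<and> (\<forall>M. M \<lhd> G \<and> P M \<longrightarrow> M \<subseteq> N))"

definition p_group_set :: "nat \<Rightarrow> 'a set \<Rightarrow> bool" where
  "p_group_set p N \<longleftrightarrow> (\<exists>n. card N = p ^ n)"

definition p'_group_set :: "nat \<Rightarrow> 'a set \<Rightarrow> bool" where
  "p'_group_set p N \<longleftrightarrow> finite N \<and> \<not> p dvd card N"

definition O_p :: "('a, 'b) monoid_scheme \<Rightarrow> nat \<Rightarrow> 'a set" where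
  "O_p G p = largest_normal G (p_group_set p)"

definition O_p' :: "('a, 'b) monoid_scheme \<Rightarrow> nat \<Rightarrow> 'a set" where
  "O_p' G p = largest_normal G (p'_group_set p)"

definition O_p'p :: "('a, 'b) monoid_scheme \<Rightarrow> nat \<Rightarrow> 'a set" where
  "O_p'p G p = {g \<in> carrier G. O_p' G p #>\<^bsub>G\<^esub> g \<in> O_p (G Mod (O_p' G p)) p}"

end

theory Submission
  imports Defs
begin


lemma (in group) card_set_mult:
  assumes A: "subgroup A G" and B: "subgroup B G" and fin: "finite (carrier G)"
  shows "card (A <#> B) * card (A \<inter> B) = card A * card B"
proof -
  interpret A: subgroup A G by fact
  interpret B: subgroup B G by fact
  have Asub: "A \<subseteq> carrier G" and Bsub: "B \<subseteq> carrier G"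
    using A B subgroup.subset by auto
  have finA: "finite A" and finB: "finite B" using Asub Bsub fin finite_subset by auto
  define f where "f = (\<lambda>(a,b). a \<otimes> b)"
  define fib where "fib x = {u \<in> A \<times> B. f u = x}" for x
  have AB: "A <#> B = f ` (A \<times> B)" by (auto simp: set_mult_def f_def image_def)
  have union: "A \<times> B = (\<Union>x\<in>A <#> B. fib x)" by (auto simp: AB fib_def)
  have finAB: "finite (A <#> B)" using AB finA finB by simp
  have fibcard: "card (fib x) = card (A \<inter> B)" if x: "x \<in> A <#> B" for x
  proof -
    obtain a0 b0 where a0: "a0 \<in> A" and b0: "b0 \<in> B" and xe: "x = a0 \<otimes> b0"
      using x by (auto simp: set_mult_def)
    have a0c: "a0 \<in> carrier G" and b0c: "b0 \<in> carrier G" using a0 b0 Asub Bsub by auto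
    define g where "g c = (a0 \<otimes> c, inv c \<otimes> b0)" for c
    have "fib x = g ` (A \<inter> B)"
    proof
      show "g ` (A \<inter> B) \<subseteq> fib x"
      proof
        fix u assume "u \<in> g ` (A \<inter> B)"
        then obtain c where c: "c \<in> A" "c \<in> B" and u: "u = g c" by auto
        have cc: "c \<in> carrier G" using c Asub by auto
        have "a0 \<otimes> c \<in> A" using a0 c by simp
        moreover have "inv c \<otimes> b0 \<in> B" using b0 c by simp
        moreover have "a0 \<otimes> c \<otimes> (inv c \<otimes> b0) = x"
        proof -
          have "c \<otimes> (inv c \<otimes> b0) = b0" using cc b0c by (simp add: m_assoc[symmetric])
          thus ?thesis using a0c b0c cc xe by (simp add: m_assoc)
        qed
        ultimately show "u \<in> fib x" by (simp add: u g_def fib_def f_def)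
      qed
    next
      show "fib x \<subseteq> g ` (A \<inter> B)"
      proof
        fix u assume "u \<in> fib x"
        then obtain a b where ab: "a \<in> A" "b \<in> B" "a \<otimes> b = x" and u: "u = (a,b)"
          by (auto simp: fib_def f_def)
        have ac: "a \<in> carrier G" and bc: "b \<in> carrier G" using ab Asub Bsub by auto
        define c where "c = inv a0 \<otimes> a"
        have cc: "c \<in> carrier G" using c_def a0c ac by simp
        have cA: "c \<in> A" using a0 ab(1) c_def by simp
        have ceq: "c = b0 \<otimes> inv b"
        proof -
          have "a0 \<otimes> b0 = a \<otimes> b" using ab xe by simp
          hence "inv a0 \<otimes> (a0 \<otimes> b0) \<otimes> inv b = inv a0 \<otimes> (a \<otimes> b) \<otimes> inv b" by simp
          moreover have "inv a0 \<otimes> (a0 \<otimes> b0) \<otimes> inv b = b0 \<otimes> inv b"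
            using a0c b0c bc by (simp add: m_assoc[symmetric])
          moreover have "inv a0 \<otimes> (a \<otimes> b) \<otimes> inv b = c"
            using a0c ac bc by (simp add: c_def m_assoc)
          ultimately show ?thesis by simp
        qed
        have cB: "c \<in> B" using b0 ab(2) ceq by simp
        have "g c = (a, b)"
        proof -
          have "a0 \<otimes> c = a" using a0c ac by (simp add: c_def m_assoc[symmetric])
          moreover have "inv c \<otimes> b0 = b" using b0c bc by (simp add: ceq inv_mult_group m_assoc)
          ultimately show ?thesis by (simp add: g_def)
        qed
        thus "u \<in> g ` (A \<inter> B)" using u cA cB by force
      qed
    qed
    moreover have "inj_on g (A \<inter> B)"
    proof (rule inj_onI)
      fix c d assume "c \<in> A \<inter> B" "d \<in> A \<inter> B" "g c = g d"
      thus "c = d" using a0c Asub by (auto simp: g_def)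
    qed
    ultimately show ?thesis by (simp add: card_image)
  qed
  have "card A * card B = card (A \<times> B)" by (simp add: card_cartesian_product)
  also have "\<dots> = card (\<Union>x\<in>A <#> B. fib x)" using union by simp
  also have "\<dots> = (\<Sum>x\<in>A <#> B. card (fib x))"
  proof (rule card_UN_disjoint[OF finAB])
    show "\<forall>i\<in>A <#> B. finite (fib i)" using finA finB by (auto simp: fib_def)
    show "\<forall>i\<in>A <#> B. \<forall>j\<in>A <#> B. i \<noteq> j \<longrightarrow> fib i \<inter> fib j = {}" by (auto simp: fib_def)
  qed
  also have "\<dots> = card (A <#> B) * card (A \<inter> B)" using fibcard by simp
  finally show ?thesis by simp
qed

lemma (in group) subgroup_card_dvd:
  assumes "subgroup K G" "subgroup L G" "K \<subseteq> L" "finite (carrier G)"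
  shows "card K dvd card L"
proof -
  interpret L: group "G\<lparr>carrier := L\<rparr>" using assms(2) subgroup_imp_group by blast
  have "subgroup K (G\<lparr>carrier := L\<rparr>)" using assms subgroup_incl by blast
  moreover have "finite L" using assms subgroup.subset finite_subset by metis
  ultimately have "card (rcosets\<^bsub>G\<lparr>carrier := L\<rparr>\<^esub> K) * card K = order (G\<lparr>carrier := L\<rparr>)"
    using L.lagrange by blast
  hence "card (rcosets\<^bsub>G\<lparr>carrier := L\<rparr>\<^esub> K) * card K = card L" by (simp add: order_def)
  thus ?thesis by (metis dvd_triv_right)
qed



lemma (in group) largest_normal_prop:
  assumes fin: "finite (carrier G)" and P1: "P {\<one>}"
    and Pmult: "\<And>M N. M \<lhd> G \<Longrightarrow> N \<lhd> G \<Longrightarrow> P M \<Longrightarrow> P N \<Longrightarrow> P (M <#> N)"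
  shows "largest_normal G P \<lhd> G \<and> P (largest_normal G P) \<and> (\<forall>M. M \<lhd> G \<and> P M \<longrightarrow> M \<subseteq> largest_normal G P)"
proof -
  define NN where "NN = {N. N \<lhd> G \<and> P N}"
  have NNsub: "NN \<subseteq> Pow (carrier G)"
    by (auto simp: NN_def dest: normal_imp_subgroup subgroup.subset)
  have finNN: "finite NN" using NNsub fin by (meson finite_Pow_iff finite_subset)
  have oneNN: "{\<one>} \<in> NN" using one_is_normal P1 by (simp add: NN_def)
  define k where "k = Max (card ` NN)"
  have "k \<in> card ` NN" unfolding k_def using finNN oneNN by (intro Max_in) auto
  then obtain N where N: "N \<in> NN" and cN: "card N = k" by auto
  have cle: "card M \<le> k" if "M \<in> NN" for M unfolding k_def using finNN that by simp
  have maxN: "M \<subseteq> N" if M: "M \<in> NN" for M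
  proof -
    have Mn: "M \<lhd> G" "P M" and Nn: "N \<lhd> G" "P N" using M N by (auto simp: NN_def)
    have MN: "M <#> N \<in> NN" using Mn Nn Pmult normal_subgroup_set_mult_closed by (simp add: NN_def)
    have Msg: "subgroup M G" and Nsg: "subgroup N G" using Mn Nn normal_imp_subgroup by auto
    have "N \<subseteq> M <#> N"
    proof
      fix n assume "n \<in> N"
      moreover have "\<one> \<in> M" using Msg subgroup.one_closed by blast
      moreover have "n = \<one> \<otimes> n" using \<open>n \<in> N\<close> Nsg subgroup.mem_carrier by fastforce
      ultimately show "n \<in> M <#> N" unfolding set_mult_def by blast
    qed
    moreover have "finite (M <#> N)"
      using setmult_subset_G[OF subgroup.subset[OF Msg] subgroup.subset[OF Nsg]] fin finite_subset by blast
    moreover have "card (M <#> N) \<le> card N" using cle[OF MN] cN by simp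
    ultimately have eq: "M <#> N = N" using card_seteq by blast
    have "M \<subseteq> M <#> N"
    proof
      fix m assume "m \<in> M"
      moreover have "\<one> \<in> N" using Nsg subgroup.one_closed by blast
      moreover have "m = m \<otimes> \<one>" using \<open>m \<in> M\<close> Msg subgroup.mem_carrier by fastforce
      ultimately show "m \<in> M <#> N" unfolding set_mult_def by blast
    qed
    thus ?thesis using eq by simp
  qed
  have "largest_normal G P = N"
    unfolding largest_normal_def
  proof (rule the_equality)
    show "N \<lhd> G \<and> P N \<and> (\<forall>M. M \<lhd> G \<and> P M \<longrightarrow> M \<subseteq> N)"
      using N maxN by (auto simp: NN_def)
  next
    fix N' assume "N' \<lhd> G \<and> P N' \<and> (\<forall>M. M \<lhd> G \<and> P M \<longrightarrow> M \<subseteq> N')"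
    moreover have "N' \<subseteq> N" using calculation maxN by (auto simp: NN_def)
    ultimately show "N' = N" using N by (auto simp: NN_def)
  qed
  thus ?thesis using N maxN by (auto simp: NN_def)
qed

lemma (in group) Op'_prop:
  assumes fin: "finite (carrier G)" and p: "Factorial_Ring.prime p"
  shows "O_p' G p \<lhd> G \<and> finite (O_p' G p) \<and> \<not> p dvd card (O_p' G p)"
proof -
  have "largest_normal G (p'_group_set p) \<lhd> G \<and> p'_group_set p (largest_normal G (p'_group_set p)) \<and> (\<forall>M. M \<lhd> G \<and> p'_group_set p M \<longrightarrow> M \<subseteq> largest_normal G (p'_group_set p))"
  proof (rule largest_normal_prop[OF fin])
    show "p'_group_set p {\<one>}" using p by (auto simp: p'_group_set_def)
  next
    fix M N assume MN: "M \<lhd> G" "N \<lhd> G" "p'_group_set p M" "p'_group_set p N"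
    have Ms: "subgroup M G" and Ns: "subgroup N G" using MN normal_imp_subgroup by auto
    have eq: "card (M <#> N) * card (M \<inter> N) = card M * card N"
      using card_set_mult[OF Ms Ns fin] .
    have "finite (M <#> N)"
      using setmult_subset_G[OF subgroup.subset[OF Ms] subgroup.subset[OF Ns]] fin finite_subset by blast
    moreover have "\<not> p dvd card (M <#> N)"
    proof
      assume "p dvd card (M <#> N)"
      hence "p dvd card M * card N" using eq by (metis dvd_mult2)
      thus False using MN p by (simp add: p'_group_set_def prime_dvd_mult_iff)
    qed
    ultimately show "p'_group_set p (M <#> N)" by (simp add: p'_group_set_def)
  qed
  thus ?thesis by (simp add: O_p'_def p'_group_set_def)
qed

lemma (in group) Op_prop:
  assumes fin: "finite (carrier G)" and p: "Factorial_Ring.prime p"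
  shows "O_p G p \<lhd> G \<and> (\<exists>n. card (O_p G p) = p ^ n)"
proof -
  have "largest_normal G (p_group_set p) \<lhd> G \<and> p_group_set p (largest_normal G (p_group_set p)) \<and> (\<forall>M. M \<lhd> G \<and> p_group_set p M \<longrightarrow> M \<subseteq> largest_normal G (p_group_set p))"
  proof (rule largest_normal_prop[OF fin])
    show "p_group_set p {\<one>}" by (auto simp: p_group_set_def intro: exI[of _ 0])
  next
    fix M N assume MN: "M \<lhd> G" "N \<lhd> G" "p_group_set p M" "p_group_set p N"
    have Ms: "subgroup M G" and Ns: "subgroup N G" using MN normal_imp_subgroup by auto
    have eq: "card (M <#> N) * card (M \<inter> N) = card M * card N"
      using card_set_mult[OF Ms Ns fin] .
    obtain a b where "card M = p ^ a" "card N = p ^ b" using MN by (auto simp: p_group_set_def)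
    hence "card (M <#> N) dvd p ^ (a + b)" using eq by (metis dvd_triv_left power_add)
    thus "p_group_set p (M <#> N)" using p divides_primepow_nat by (auto simp: p_group_set_def)
  qed
  thus ?thesis by (simp add: O_p_def p_group_set_def)
qed



lemma preimage_normal:
  assumes hom: "group_hom G K h" and Y: "Y \<lhd> K"
  shows "{g \<in> carrier G. h g \<in> Y} \<lhd> G"
proof -
  interpret group_hom G K h by fact
  have Ys: "subgroup Y K" using Y normal_imp_subgroup by blast
  show ?thesis
  proof (rule G.normal_invI)
    show "subgroup {g \<in> carrier G. h g \<in> Y} G"
    proof (rule G.subgroupI)
      show "{g \<in> carrier G. h g \<in> Y} \<subseteq> carrier G" by auto
      show "{g \<in> carrier G. h g \<in> Y} \<noteq> {}" using Ys subgroup.one_closed by fastforce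
    next
      fix a assume "a \<in> {g \<in> carrier G. h g \<in> Y}"
      thus "inv\<^bsub>G\<^esub> a \<in> {g \<in> carrier G. h g \<in> Y}" using Ys by (simp add: subgroup.m_inv_closed)
    next
      fix a b assume "a \<in> {g \<in> carrier G. h g \<in> Y}" "b \<in> {g \<in> carrier G. h g \<in> Y}"
      thus "a \<otimes>\<^bsub>G\<^esub> b \<in> {g \<in> carrier G. h g \<in> Y}" using Ys by (simp add: subgroup.m_closed)
    qed
  next
    fix x n assume x: "x \<in> carrier G" and n: "n \<in> {g \<in> carrier G. h g \<in> Y}"
    have "h x \<otimes>\<^bsub>K\<^esub> h n \<otimes>\<^bsub>K\<^esub> inv\<^bsub>K\<^esub> h x \<in> Y"
      using H.normal_invE(2)[OF Y] x n by simp
    thus "x \<otimes>\<^bsub>G\<^esub> n \<otimes>\<^bsub>G\<^esub> inv\<^bsub>G\<^esub> x \<in> {g \<in> carrier G. h g \<in> Y}" using x n by simp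
  qed
qed

locale ctx = group H for H (structure) +
  fixes p S N Q P
  assumes fin: "finite (carrier H)" and pr: "Factorial_Ring.prime p"
    and syl: "sylow_subgroup H p S"
    and hyp: "centre H S \<subseteq> Q"
    and N_def: "N = O_p' H p" and Q_def: "Q = O_p'p H p" and P_def: "P = S \<inter> Q"
begin

lemma N_props: "N \<lhd> H" "finite N" "\<not> p dvd card N"
  using Op'_prop[OF fin pr] N_def by auto

lemma N_sg: "subgroup N H" using N_props normal_imp_subgroup by blast

interpretation Nn: normal N H using N_props by blast

lemma Mod_group: "group (H Mod N)" by (rule Nn.factorgroup_is_group)

lemma Mod_fin: "finite (carrier (H Mod N))"
  using fin by (simp add: carrier_FactGroup)

lemma Qb_props: "O_p (H Mod N) p \<lhd> H Mod N" "\<exists>n. card (O_p (H Mod N) p) = p ^ n"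
  using group.Op_prop[OF Mod_group Mod_fin pr] by auto

lemma Q_eq: "Q = {g \<in> carrier H. N #> g \<in> O_p (H Mod N) p}"
  by (simp add: Q_def O_p'p_def N_def)

lemma Q_normal: "Q \<lhd> H"
proof -
  have "group_hom H (H Mod N) (\<lambda>a. N #> a)"
    using Nn.r_coset_hom_Mod Mod_group by (simp add: group_hom_def group_hom_axioms_def is_group)
  from preimage_normal[OF this Qb_props(1)] show ?thesis using Q_eq by simp
qed

lemma Q_sg: "subgroup Q H" using Q_normal normal_imp_subgroup by blast

lemma N_sub_Q: "N \<subseteq> Q"
proof
  fix n assume n: "n \<in> N"
  have "N #> n = N" using n Nn.rcos_const by blast
  moreover have "N = \<one>\<^bsub>H Mod N\<^esub>" by simp
  moreover have "\<one>\<^bsub>H Mod N\<^esub> \<in> O_p (H Mod N) p"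
    using Qb_props(1) normal_imp_subgroup subgroup.one_closed by blast
  ultimately show "n \<in> Q" using n Q_eq Nn.subset by auto
qed

lemma card_Q: "card Q = card N * card (O_p (H Mod N) p)"
proof -
  let ?Qb = "O_p (H Mod N) p"
  have "?Qb \<subseteq> carrier (H Mod N)"
    using Qb_props(1) normal_imp_subgroup subgroup.subset by blast
  hence Qbsub: "?Qb \<subseteq> rcosets N" by (simp add: FactGroup_def)
  have U: "Q = \<Union> ?Qb"
  proof
    show "Q \<subseteq> \<Union> ?Qb"
    proof
      fix g assume "g \<in> Q"
      hence "g \<in> carrier H" "N #> g \<in> ?Qb" using Q_eq by auto
      moreover have "g \<in> N #> g" using calculation rcos_self N_sg by blast
      ultimately show "g \<in> \<Union> ?Qb" by blast
    qed
  next
    show "\<Union> ?Qb \<subseteq> Q"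
    proof
      fix x assume "x \<in> \<Union> ?Qb"
      then obtain C where C: "C \<in> ?Qb" "x \<in> C" by blast
      then obtain g where g: "g \<in> carrier H" "C = N #> g" using Qbsub unfolding RCOSETS_def by blast
      have "N #> g = N #> x" using repr_independence[of x N g] C g N_sg by blast
      moreover have "x \<in> carrier H" using C g Nn.subset r_coset_subset_G by blast
      ultimately show "x \<in> Q" using Q_eq C g by auto
    qed
  qed
  have "finite (rcosets N)" using Mod_fin by (simp add: FactGroup_def)
  hence finQb: "finite ?Qb" using Qbsub finite_subset by blast
  have finQ: "finite Q" using Q_sg subgroup.subset fin finite_subset by blast
  have "card N * card ?Qb = card (\<Union> ?Qb)"
  proof (rule card_partition[OF finQb])
    show "finite (\<Union> ?Qb)" using U finQ by simp
    show "\<And>c. c \<in> ?Qb \<Longrightarrow> card c = card N"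
    proof -
      fix c assume "c \<in> ?Qb"
      hence "c \<in> rcosets N" using Qbsub by blast
      thus "card c = card N" using card_rcosets_equal[OF _ Nn.subset] by simp
    qed
    show "\<And>c1 c2. c1 \<in> ?Qb \<Longrightarrow> c2 \<in> ?Qb \<Longrightarrow> c1 \<noteq> c2 \<Longrightarrow> c1 \<inter> c2 = {}"
    proof -
      fix c1 c2 assume "c1 \<in> ?Qb" "c2 \<in> ?Qb" "c1 \<noteq> c2"
      hence "c1 \<in> rcosets N" "c2 \<in> rcosets N" "c1 \<noteq> c2" using Qbsub by auto
      thus "c1 \<inter> c2 = {}" using rcos_disjoint[OF N_sg] by (simp add: pairwise_def disjnt_def)
    qed
  qed
  thus ?thesis using U by simp
qed

end


context ctx begin

interpretation Nn: normal N H using N_props by blast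

definition a where "a = multiplicity p (order H)"

lemma S_sg: "subgroup S H" using syl by (simp add: sylow_subgroup_def)
lemma card_S: "card S = p ^ a" using syl by (simp add: sylow_subgroup_def a_def)

lemma p_gt1: "1 < p" using pr prime_gt_1_nat by blast

lemma order_ne0: "order H \<noteq> 0" using fin order_gt_0_iff_finite by auto

lemma P_sg: "subgroup P H" using P_def S_sg Q_sg subgroups_Inter_pair by simp

lemma P_sub: "P \<subseteq> S" "P \<subseteq> Q" using P_def by auto

lemma pgroup_dvd: assumes "k dvd p ^ e" obtains i where "k = p ^ i"
  using assms divides_primepow_nat pr by blast

lemma card_P: obtains b where "card P = p ^ b"
proof -
  have "card P dvd card S" using subgroup_card_dvd P_sg S_sg P_sub fin by blast
  then obtain i where "card P = p ^ i" using pgroup_dvd[of "card P" a] card_S by auto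
  thus ?thesis by (rule that)
qed

lemma pgroup_int_N_trivial:
  assumes K: "subgroup K H" "K \<subseteq> S"
  shows "N \<inter> K = {\<one>}"
proof -
  have sg: "subgroup (N \<inter> K) H" using N_sg K subgroups_Inter_pair by blast
  have "card (N \<inter> K) dvd card S" using subgroup_card_dvd[OF sg S_sg] K fin by blast
  then obtain i where i: "card (N \<inter> K) = p ^ i" using pgroup_dvd[of "card (N \<inter> K)" a] card_S by auto
  have "card (N \<inter> K) dvd card N" using subgroup_card_dvd[OF sg N_sg] fin by blast
  have "i = 0"
  proof (rule ccontr)
    assume "i \<noteq> 0"
    hence "p dvd card (N \<inter> K)" using i by simp
    thus False using \<open>card (N \<inter> K) dvd card N\<close> N_props(3) dvd_trans by blast
  qed
  hence "card (N \<inter> K) = 1" using i by simp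
  moreover have "\<one> \<in> N \<inter> K" using sg subgroup.one_closed by blast
  moreover obtain x where "N \<inter> K = {x}" using calculation(1) by (rule card_1_singletonE)
  ultimately show ?thesis by auto
qed

lemma NP_int: "N \<inter> P = {\<one>}" using pgroup_int_N_trivial P_sg P_sub by blast

lemma NP_eq: "N <#> P = Q"
proof -
  obtain n where n: "card (O_p (H Mod N) p) = p ^ n" using Qb_props(2) by blast
  obtain b where b: "card P = p ^ b" using card_P by blast
  have QS: "subgroup (Q <#> S) H"
    using second_isomorphism_grp.normal_set_mult_subgroup Q_normal S_sg
    unfolding second_isomorphism_grp_def second_isomorphism_grp_axioms_def by blast
  have eq: "card (Q <#> S) * card P = card Q * card S"
    using card_set_mult[OF Q_sg S_sg fin] P_def by (simp add: Int_commute)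
  have dv: "card (Q <#> S) dvd order H"
    using subgroup_card_dvd[OF QS subgroup_self] subgroup.subset[OF QS] fin by (simp add: order_def)
  have "n \<le> b"
  proof (rule ccontr)
    assume "\<not> n \<le> b"
    hence nb: "n = b + (n - b)" by simp
    have "card (Q <#> S) * p ^ b = (card N * p ^ (n - b + a)) * p ^ b"
      using eq b card_Q n card_S by (subst (asm) nb) (simp add: power_add mult_ac)
    hence "card (Q <#> S) = card N * p ^ (n - b + a)" using p_gt1 by simp
    moreover have "n - b + a = Suc a + (n - b - 1)" using \<open>\<not> n \<le> b\<close> by simp
    hence "p ^ (n - b + a) = p ^ Suc a * p ^ (n - b - 1)" by (simp only: power_add)
    ultimately have "card (Q <#> S) = p ^ Suc a * (card N * p ^ (n - b - 1))" by simp
    hence "p ^ Suc a dvd card (Q <#> S)" by simp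
    hence "p ^ Suc a dvd order H" using dv dvd_trans by blast
    moreover have "\<not> is_unit p" using p_gt1 by simp
    ultimately have "Suc a \<le> multiplicity p (order H)"
      using power_dvd_iff_le_multiplicity[OF order_ne0] by blast
    thus False by (simp add: a_def)
  qed
  have sub: "N <#> P \<subseteq> Q"
  proof
    fix x assume "x \<in> N <#> P"
    then obtain u v where "u \<in> N" "v \<in> P" "x = u \<otimes> v" by (auto simp: set_mult_def)
    moreover have "u \<in> Q" "v \<in> Q" using calculation N_sub_Q P_sub by auto
    ultimately show "x \<in> Q" using subgroup.m_closed[OF Q_sg] by simp
  qed
  have "card (N <#> P) = card N * p ^ b"
    using card_set_mult[OF N_sg P_sg fin] NP_int b by simp
  moreover have "card N * p ^ n \<le> card N * p ^ b"
    using \<open>n \<le> b\<close> p_gt1 by (simp add: power_increasing)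
  ultimately have "card Q \<le> card (N <#> P)" using card_Q n by simp
  moreover have "finite Q" using Q_sg subgroup.subset fin finite_subset by blast
  ultimately show ?thesis using sub card_seteq by blast
qed

end


lemma (in group) inv_cancel_left [simp]:
  "x \<in> carrier G \<Longrightarrow> y \<in> carrier G \<Longrightarrow> inv x \<otimes> (x \<otimes> y) = y"
  by (simp add: m_assoc[symmetric])

lemma (in group) inv_cancel_left2 [simp]:
  "x \<in> carrier G \<Longrightarrow> y \<in> carrier G \<Longrightarrow> x \<otimes> (inv x \<otimes> y) = y"
  by (simp add: m_assoc[symmetric])

context ctx begin

interpretation Nn: normal N H using N_props by blast
interpretation Qn: normal Q H using Q_normal by blast
interpretation Ps: subgroup P H using P_sg by blast
interpretation Ss: subgroup S H using S_sg by blast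

lemma N_car: "x \<in> N \<Longrightarrow> x \<in> carrier H" using Nn.subset by blast
lemma Q_car: "x \<in> Q \<Longrightarrow> x \<in> carrier H" using Qn.subset by blast
lemma P_car: "x \<in> P \<Longrightarrow> x \<in> carrier H" using Ps.subset by blast
lemma S_car: "x \<in> S \<Longrightarrow> x \<in> carrier H" using Ss.subset by blast
lemma P_Q: "x \<in> P \<Longrightarrow> x \<in> Q" using P_sub by blast
lemma P_S: "x \<in> P \<Longrightarrow> x \<in> S" using P_sub by blast
lemma N_Q: "x \<in> N \<Longrightarrow> x \<in> Q" using N_sub_Q by blast

definition pi where "pi q = (THE y. y \<in> P \<and> q \<otimes> inv y \<in> N)"

lemma pi_unique_aux:
  assumes q: "q \<in> carrier H" and y1: "y1 \<in> P" "q \<otimes> inv y1 \<in> N" and y2: "y2 \<in> P" "q \<otimes> inv y2 \<in> N"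
  shows "y1 = y2"
proof -
  have c: "y1 \<in> carrier H" "y2 \<in> carrier H" using y1 y2 P_car by auto
  have "inv (q \<otimes> inv y1) \<otimes> (q \<otimes> inv y2) \<in> N" using y1 y2 by simp
  moreover have "inv (q \<otimes> inv y1) \<otimes> (q \<otimes> inv y2) = y1 \<otimes> inv y2"
    using q c by (simp add: inv_mult_group m_assoc)
  ultimately have "y1 \<otimes> inv y2 \<in> N \<inter> P" using y1 y2 by simp
  hence e: "y1 \<otimes> inv y2 = \<one>" using NP_int by simp
  have "y1 = (y1 \<otimes> inv y2) \<otimes> y2" using c by (simp add: m_assoc)
  also have "\<dots> = y2" using e c by simp
  finally show ?thesis .
qed

lemma pi_prop: assumes q: "q \<in> Q" shows "pi q \<in> P" "q \<otimes> inv (pi q) \<in> N"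
proof -
  obtain u v where uv: "u \<in> N" "v \<in> P" "q = u \<otimes> v" using q NP_eq[symmetric] by (auto simp: set_mult_def)
  have ex: "v \<in> P \<and> q \<otimes> inv v \<in> N" using uv N_car P_car by (simp add: m_assoc)
  have qc: "q \<in> carrier H" using q Q_car by blast
  have "pi q \<in> P \<and> q \<otimes> inv (pi q) \<in> N"
    unfolding pi_def
  proof (rule theI[of _ v])
    show "v \<in> P \<and> q \<otimes> inv v \<in> N" by (rule ex)
    fix y assume "y \<in> P \<and> q \<otimes> inv y \<in> N"
    thus "y = v" using pi_unique_aux[OF qc, of y v] ex by simp
  qed
  thus "pi q \<in> P" "q \<otimes> inv (pi q) \<in> N" by auto
qed

lemma pi_unique: assumes "q \<in> Q" "y \<in> P" "q \<otimes> inv y \<in> N" shows "pi q = y"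
  using pi_unique_aux[OF Q_car[OF assms(1)] pi_prop[OF assms(1)] assms(2,3)] .

lemma pi_car: "q \<in> Q \<Longrightarrow> pi q \<in> carrier H" using pi_prop P_car by blast

lemma pi_P: "y \<in> P \<Longrightarrow> pi y = y"
  using pi_unique[of y y] P_Q P_car Nn.one_closed by simp

lemma pi_N: "n \<in> N \<Longrightarrow> pi n = \<one>"
  using pi_unique[of n \<one>] N_Q N_car Ps.one_closed by simp

lemma pi_mult: assumes q1: "q1 \<in> Q" and q2: "q2 \<in> Q" shows "pi (q1 \<otimes> q2) = pi q1 \<otimes> pi q2"
proof (rule pi_unique)
  show "q1 \<otimes> q2 \<in> Q" using q1 q2 by simp
  show "pi q1 \<otimes> pi q2 \<in> P" using q1 q2 pi_prop by simp
  have c: "q1 \<in> carrier H" "q2 \<in> carrier H" "pi q1 \<in> carrier H" "pi q2 \<in> carrier H"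
    using q1 q2 Q_car pi_car by auto
  have n1: "q1 \<otimes> inv (pi q1) \<in> N" and n2: "q2 \<otimes> inv (pi q2) \<in> N" using q1 q2 pi_prop by auto
  have "pi q1 \<otimes> (q2 \<otimes> inv (pi q2)) \<otimes> inv (pi q1) \<in> N" using n2 c Nn.inv_op_closed2 by blast
  hence "(q1 \<otimes> inv (pi q1)) \<otimes> (pi q1 \<otimes> (q2 \<otimes> inv (pi q2)) \<otimes> inv (pi q1)) \<in> N" using n1 by simp
  moreover have "(q1 \<otimes> inv (pi q1)) \<otimes> (pi q1 \<otimes> (q2 \<otimes> inv (pi q2)) \<otimes> inv (pi q1))
      = q1 \<otimes> q2 \<otimes> inv (pi q1 \<otimes> pi q2)"
    using c by (simp add: m_assoc inv_mult_group)
  ultimately show "q1 \<otimes> q2 \<otimes> inv (pi q1 \<otimes> pi q2) \<in> N" by simp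
qed

lemma conj_Q: "g \<in> carrier H \<Longrightarrow> x \<in> Q \<Longrightarrow> inv g \<otimes> x \<otimes> g \<in> Q"
  using Qn.inv_op_closed1 by blast

definition phi where "phi g x = pi (inv g \<otimes> x \<otimes> g)"

lemma phi_P: "g \<in> carrier H \<Longrightarrow> x \<in> P \<Longrightarrow> phi g x \<in> P"
  unfolding phi_def using conj_Q P_Q pi_prop by blast

lemma phi_car: "g \<in> carrier H \<Longrightarrow> x \<in> P \<Longrightarrow> phi g x \<in> carrier H"
  using phi_P P_car by blast

lemma phi_mult: assumes g: "g \<in> carrier H" and x: "x \<in> P" and y: "y \<in> P"
  shows "phi g (x \<otimes> y) = phi g x \<otimes> phi g y"
proof -
  have c: "x \<in> carrier H" "y \<in> carrier H" using x y P_car by auto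
  have "inv g \<otimes> (x \<otimes> y) \<otimes> g = (inv g \<otimes> x \<otimes> g) \<otimes> (inv g \<otimes> y \<otimes> g)"
    using g c by (simp add: m_assoc)
  thus ?thesis unfolding phi_def using pi_mult conj_Q P_Q g x y by simp
qed

lemma phi_one: "x \<in> P \<Longrightarrow> phi \<one> x = x"
  unfolding phi_def using P_car pi_P by simp

lemma phi_conjP: "g \<in> carrier H \<Longrightarrow> x \<in> P \<Longrightarrow> inv g \<otimes> x \<otimes> g \<in> P \<Longrightarrow> phi g x = inv g \<otimes> x \<otimes> g"
  unfolding phi_def using pi_P by simp

lemma phi_comp: assumes g: "g \<in> carrier H" and h: "h \<in> carrier H" and x: "x \<in> P"
  shows "phi (g \<otimes> h) x = phi h (phi g x)"
proof -
  define c where "c = inv g \<otimes> x \<otimes> g"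
  have cQ: "c \<in> Q" using c_def conj_Q g x P_Q by blast
  define y where "y = pi c"
  have yP: "y \<in> P" using y_def cQ pi_prop by blast
  define m where "m = c \<otimes> inv y"
  have mN: "m \<in> N" using m_def y_def cQ pi_prop by blast
  have cc: "c \<in> carrier H" "y \<in> carrier H" "m \<in> carrier H" "x \<in> carrier H"
    using cQ yP mN Q_car P_car N_car x by auto
  have ceq: "c = m \<otimes> y" using cc by (simp add: m_def m_assoc)
  have "inv (g \<otimes> h) \<otimes> x \<otimes> (g \<otimes> h) = inv h \<otimes> c \<otimes> h"
    using g h cc by (simp add: c_def m_assoc inv_mult_group)
  also have "\<dots> = (inv h \<otimes> m \<otimes> h) \<otimes> (inv h \<otimes> y \<otimes> h)"
    using h cc by (simp add: ceq m_assoc)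
  finally have e: "inv (g \<otimes> h) \<otimes> x \<otimes> (g \<otimes> h) = (inv h \<otimes> m \<otimes> h) \<otimes> (inv h \<otimes> y \<otimes> h)" .
  have mN': "inv h \<otimes> m \<otimes> h \<in> N" using Nn.inv_op_closed1 h mN by blast
  have "phi (g \<otimes> h) x = pi ((inv h \<otimes> m \<otimes> h) \<otimes> (inv h \<otimes> y \<otimes> h))"
    unfolding phi_def e ..
  also have "\<dots> = pi (inv h \<otimes> m \<otimes> h) \<otimes> pi (inv h \<otimes> y \<otimes> h)"
    by (rule pi_mult[OF N_Q[OF mN'] conj_Q[OF h P_Q[OF yP]]])
  also have "\<dots> = phi h y" using pi_N[OF mN'] pi_car[OF conj_Q[OF h P_Q[OF yP]]] by (simp add: phi_def)
  finally show ?thesis by (simp add: y_def c_def phi_def)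
qed

lemma phi_N: assumes n: "n \<in> N" and x: "x \<in> P" shows "phi n x = x"
proof -
  have c: "n \<in> carrier H" "x \<in> carrier H" using n x N_car P_car by auto
  have m: "inv x \<otimes> inv n \<otimes> x \<in> N" using Nn.inv_op_closed1 c n by simp
  hence mN: "inv x \<otimes> inv n \<otimes> x \<otimes> n \<in> N" using n by simp
  have "inv n \<otimes> x \<otimes> n = x \<otimes> (inv x \<otimes> inv n \<otimes> x \<otimes> n)" using c by (simp add: m_assoc)
  hence "phi n x = pi x \<otimes> pi (inv x \<otimes> inv n \<otimes> x \<otimes> n)"
    unfolding phi_def using pi_mult P_Q x N_Q mN by simp
  thus ?thesis using pi_P x pi_N mN c by simp
qed

lemma phi_inv_cancel: "g \<in> carrier H \<Longrightarrow> y \<in> P \<Longrightarrow> phi g (phi (inv g) y) = y"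
  using phi_comp[of "inv g" g y] phi_one by simp

end



lemma funpow_in: "\<sigma> ` \<Omega> \<subseteq> \<Omega> \<Longrightarrow> w \<in> \<Omega> \<Longrightarrow> (\<sigma> ^^ j) w \<in> \<Omega>"
  by (induction j) auto

lemma orbit_card_dvd:
  fixes \<sigma> :: "'a \<Rightarrow> 'a"
  assumes e: "(\<sigma> ^^ e) w = w" "0 < e"
  obtains d where "0 < d" "d dvd e" "card (range (\<lambda>j. (\<sigma> ^^ j) w)) = d" "(\<sigma> ^^ d) w = w"
    "\<And>j. 0 < j \<Longrightarrow> j < d \<Longrightarrow> (\<sigma> ^^ j) w \<noteq> w"
proof -
  define d where "d = (LEAST d. 0 < d \<and> (\<sigma> ^^ d) w = w)"
  have d: "0 < d \<and> (\<sigma> ^^ d) w = w" unfolding d_def by (rule LeastI[of _ e]) (use e in auto)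
  have dmin: "(\<sigma> ^^ j) w \<noteq> w" if "0 < j" "j < d" for j
    using not_less_Least[of j "\<lambda>d. 0 < d \<and> (\<sigma> ^^ d) w = w"] that unfolding d_def by auto
  have "(\<sigma> ^^ (e mod d)) w = w" using funpow_mod_eq[where f=\<sigma> and n=d and x=w and m=e] d e by simp
  have "e mod d = 0"
  proof (rule ccontr)
    assume "e mod d \<noteq> 0"
    hence "0 < e mod d" "e mod d < d" using d by auto
    thus False using dmin \<open>(\<sigma> ^^ (e mod d)) w = w\<close> by blast
  qed
  hence dvd: "d dvd e" by (simp add: mod_eq_0_iff_dvd)
  have R: "range (\<lambda>j. (\<sigma> ^^ j) w) = (\<lambda>j. (\<sigma> ^^ j) w) ` {..<d}"
  proof
    show "range (\<lambda>j. (\<sigma> ^^ j) w) \<subseteq> (\<lambda>j. (\<sigma> ^^ j) w) ` {..<d}"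
    proof
      fix x assume "x \<in> range (\<lambda>j. (\<sigma> ^^ j) w)"
      then obtain j where "x = (\<sigma> ^^ j) w" by auto
      hence "x = (\<sigma> ^^ (j mod d)) w" using funpow_mod_eq[where f=\<sigma> and n=d and x=w and m=j] d by simp
      moreover have "j mod d < d" using d by simp
      ultimately show "x \<in> (\<lambda>j. (\<sigma> ^^ j) w) ` {..<d}" by blast
    qed
  qed auto
  have inj: "inj_on (\<lambda>j. (\<sigma> ^^ j) w) {..<d}"
  proof (rule inj_onI)
    fix i j assume ij: "i \<in> {..<d}" "j \<in> {..<d}" "(\<sigma> ^^ i) w = (\<sigma> ^^ j) w"
    show "i = j"
    proof (rule ccontr)
      assume "i \<noteq> j"
      then consider "i < j" | "j < i" by linarith
      thus False
      proof cases
        case 1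
        have "(\<sigma> ^^ (d - j + i)) w = (\<sigma> ^^ (d - j)) ((\<sigma> ^^ i) w)" by (simp add: funpow_add)
        also have "\<dots> = (\<sigma> ^^ (d - j)) ((\<sigma> ^^ j) w)" by (simp only: ij(3))
        also have "\<dots> = (\<sigma> ^^ (d - j + j)) w" by (simp only: funpow_add comp_apply)
        also have "\<dots> = w" using d \<open>j \<in> {..<d}\<close> by simp
        finally have X: "(\<sigma> ^^ (d - j + i)) w = w" .
        have "0 < d - j + i" "d - j + i < d" using 1 ij(1,2) by auto
        from dmin[OF this] X show False by contradiction
      next
        case 2
        have "(\<sigma> ^^ (d - i + j)) w = (\<sigma> ^^ (d - i)) ((\<sigma> ^^ j) w)" by (simp add: funpow_add)
        also have "\<dots> = (\<sigma> ^^ (d - i)) ((\<sigma> ^^ i) w)" by (simp only: ij(3))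
        also have "\<dots> = (\<sigma> ^^ (d - i + i)) w" by (simp only: funpow_add comp_apply)
        also have "\<dots> = w" using d \<open>i \<in> {..<d}\<close> by simp
        finally have X: "(\<sigma> ^^ (d - i + j)) w = w" .
        have "0 < d - i + j" "d - i + j < d" using 2 ij(1,2) by auto
        from dmin[OF this] X show False by contradiction
      qed
    qed
  qed
  have "card (range (\<lambda>j. (\<sigma> ^^ j) w)) = d" using R inj by (simp add: card_image)
  thus ?thesis using d by (intro that[OF _ dvd _ _ dmin]) auto
qed

lemma perm_fixed_point:
  fixes \<sigma> :: "'a \<Rightarrow> 'a"
  assumes "finite \<Omega>" "\<sigma> ` \<Omega> \<subseteq> \<Omega>" "\<forall>w\<in>\<Omega>. (\<sigma> ^^ (p ^ k)) w = w"
    "Factorial_Ring.prime p" "\<not> p dvd card \<Omega>"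
  shows "\<exists>w\<in>\<Omega>. \<sigma> w = w"
  using assms
proof (induction "card \<Omega>" arbitrary: \<Omega> rule: less_induct)
  case less
  have p1: "1 < p" using less.prems(4) prime_gt_1_nat by blast
  have "\<Omega> \<noteq> {}" using less.prems(5) by auto
  then obtain w where w: "w \<in> \<Omega>" by blast
  show ?case
  proof (cases "\<sigma> w = w")
    case True thus ?thesis using w by blast
  next
    case False
    define Orb where "Orb = range (\<lambda>j. (\<sigma> ^^ j) w)"
    have OO: "Orb \<subseteq> \<Omega>" using funpow_in[OF less.prems(2) w] by (auto simp: Orb_def)
    have e: "(\<sigma> ^^ (p ^ k)) w = w" "0 < p ^ k" using less.prems(3) w p1 by auto
    obtain d where d: "0 < d" "d dvd p ^ k" "card Orb = d" "(\<sigma> ^^ d) w = w"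
      "\<And>j. 0 < j \<Longrightarrow> j < d \<Longrightarrow> (\<sigma> ^^ j) w \<noteq> w"
      using orbit_card_dvd[OF e] unfolding Orb_def by blast
    obtain i where i: "d = p ^ i" using d(2) divides_primepow_nat less.prems(4) by blast
    have "d \<noteq> 1"
    proof
      assume "d = 1"
      hence "(\<sigma> ^^ 1) w = w" using d(4) by simp
      thus False using False by simp
    qed
    hence "i \<noteq> 0" using i by auto
    hence pd: "p dvd card Orb" using d(3) i by simp
    define R where "R = \<Omega> - Orb"
    have finR: "finite R" using less.prems(1) by (simp add: R_def)
    have cardR: "card R = card \<Omega> - card Orb" using OO less.prems(1) by (simp add: R_def card_Diff_subset finite_subset)
    have "card Orb \<le> card \<Omega>" using OO less.prems(1) card_mono by blast
    have npR: "\<not> p dvd card R"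
    proof
      assume "p dvd card R"
      hence "p dvd card R + card Orb" using pd by simp
      hence "p dvd card \<Omega>" using cardR \<open>card Orb \<le> card \<Omega>\<close> by simp
      thus False using less.prems(5) by blast
    qed
    have "0 < card \<Omega>" using less.prems(1) w card_gt_0_iff by blast
    hence lt: "card R < card \<Omega>" using cardR d(1) d(3) \<open>card Orb \<le> card \<Omega>\<close> by linarith
    have sR: "\<sigma> ` R \<subseteq> R"
    proof
      fix x assume "x \<in> \<sigma> ` R"
      then obtain y where y: "y \<in> R" "x = \<sigma> y" by blast
      have "x \<in> \<Omega>" using y less.prems(2) by (auto simp: R_def)
      moreover have "x \<notin> Orb"
      proof
        assume "x \<in> Orb"
        then obtain j where xj: "x = (\<sigma> ^^ j) w" by (auto simp: Orb_def)
        have "y = (\<sigma> ^^ (p ^ k)) y" using less.prems(3) y by (simp add: R_def)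
        also have "\<dots> = (\<sigma> ^^ Suc (p ^ k - 1)) y" using e(2) by simp
        also have "\<dots> = (\<sigma> ^^ (p ^ k - 1)) (\<sigma> y)" by (simp only: funpow_Suc_right comp_apply)
        also have "\<dots> = (\<sigma> ^^ (p ^ k - 1 + j)) w" using y xj by (simp add: funpow_add)
        finally have "y \<in> Orb" by (auto simp: Orb_def)
        thus False using y by (simp add: R_def)
      qed
      ultimately show "x \<in> R" by (simp add: R_def)
    qed
    have "\<forall>w\<in>R. (\<sigma> ^^ (p ^ k)) w = w" using less.prems(3) by (simp add: R_def)
    then obtain v where "v \<in> R" "\<sigma> v = v" using less.hyps[OF lt finR sR _ less.prems(4) npR] by blast
    thus ?thesis by (auto simp: R_def)
  qed
qed


context ctx begin

interpretation Nn: normal N H using N_props by blast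
interpretation Qn: normal Q H using Q_normal by blast
interpretation Ps: subgroup P H using P_sg by blast
interpretation Ss: subgroup S H using S_sg by blast

lemma centre_P: "centre H S \<subseteq> P" using hyp P_def by (auto simp: centre_def)

lemma conj_pow: "g \<in> carrier H \<Longrightarrow> z \<in> carrier H \<Longrightarrow> (inv g \<otimes> z \<otimes> g) [^] (k::nat) = inv g \<otimes> (z [^] k) \<otimes> g"
proof (induction k)
  case 0 thus ?case by simp
next
  case (Suc k)
  have "(inv g \<otimes> z \<otimes> g) [^] Suc k = (inv g \<otimes> (z [^] k) \<otimes> g) \<otimes> (inv g \<otimes> z \<otimes> g)" using Suc by simp
  also have "\<dots> = inv g \<otimes> (z [^] k \<otimes> z) \<otimes> g" using Suc.prems by (simp add: m_assoc)
  finally show ?case by simp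
qed

lemma S_pow: assumes "z \<in> S" shows "z [^] (p ^ a) = \<one>"
proof -
  interpret SG: group "H\<lparr>carrier := S\<rparr>" using S_sg subgroup_imp_group by blast
  have "finite S" using Ss.subset fin finite_subset by blast
  hence "z [^]\<^bsub>H\<lparr>carrier := S\<rparr>\<^esub> order (H\<lparr>carrier := S\<rparr>) = \<one>\<^bsub>H\<lparr>carrier := S\<rparr>\<^esub>"
    using SG.pow_order_eq_1 assms by simp
  thus ?thesis using card_S by (simp add: order_def nat_pow_consistent[symmetric])
qed

definition nu where "nu q = inv (pi q) \<otimes> q"

lemma nu_N: assumes q: "q \<in> Q" shows "nu q \<in> N"
proof -
  have c: "q \<in> carrier H" "pi q \<in> carrier H" using q Q_car pi_car by auto
  have "inv (pi q) \<otimes> (q \<otimes> inv (pi q)) \<otimes> pi q \<in> N"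
    using Nn.inv_op_closed1[OF c(2) pi_prop(2)[OF q]] .
  moreover have "inv (pi q) \<otimes> (q \<otimes> inv (pi q)) \<otimes> pi q = nu q" using c by (simp add: nu_def m_assoc)
  ultimately show ?thesis by simp
qed

lemma nu_left: assumes y: "y \<in> P" and r: "r \<in> Q" shows "nu (y \<otimes> r) = nu r"
proof -
  have c: "y \<in> carrier H" "r \<in> carrier H" "pi r \<in> carrier H" using y r P_car Q_car pi_car by auto
  have "pi (y \<otimes> r) = y \<otimes> pi r" using pi_mult[OF P_Q[OF y] r] pi_P[OF y] by simp
  thus ?thesis using c by (simp add: nu_def inv_mult_group m_assoc)
qed

lemma nu_N_id: "n \<in> N \<Longrightarrow> nu n = n"
  using pi_N N_car by (simp add: nu_def)

lemma conj_into_P: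
  assumes z: "z \<in> P" and g: "g \<in> carrier H"
  shows "\<exists>m\<in>N. inv m \<otimes> (inv g \<otimes> z \<otimes> g) \<otimes> m \<in> P"
proof -
  define x where "x = inv g \<otimes> z \<otimes> g"
  have xQ: "x \<in> Q" using x_def conj_Q[OF g P_Q[OF z]] by simp
  have xc: "x \<in> carrier H" using xQ Q_car by blast
  have zc: "z \<in> carrier H" using z P_car by blast
  define \<sigma> where "\<sigma> n = nu (n \<otimes> x)" for n
  have nxQ: "n \<otimes> x \<in> Q" if "n \<in> N" for n using that N_Q xQ by simp
  have sN: "\<sigma> ` N \<subseteq> N" using nu_N nxQ by (auto simp: \<sigma>_def)
  have powQ: "x [^] (j::nat) \<in> Q" for j
    by (induction j) (use xQ Qn.one_closed Qn.m_closed in auto)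
  have iter: "(\<sigma> ^^ j) n = nu (n \<otimes> x [^] j)" if n: "n \<in> N" for j n
  proof (induction j)
    case 0 thus ?case using n N_car nu_N_id by simp
  next
    case (Suc j)
    have nc: "n \<in> carrier H" using n N_car by blast
    have q: "n \<otimes> x [^] j \<in> Q" using n N_Q powQ by simp
    have "(\<sigma> ^^ Suc j) n = \<sigma> ((\<sigma> ^^ j) n)" by simp
    also have "\<dots> = \<sigma> (nu (n \<otimes> x [^] j))" using Suc.IH by simp
    also have "\<dots> = nu (nu (n \<otimes> x [^] j) \<otimes> x)" by (simp add: \<sigma>_def)
    also have "nu (n \<otimes> x [^] j) \<otimes> x = inv (pi (n \<otimes> x [^] j)) \<otimes> (n \<otimes> x [^] j \<otimes> x)"
      using nc xc pi_car[OF q] by (simp add: nu_def m_assoc)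
    also have "nu \<dots> = nu (n \<otimes> x [^] j \<otimes> x)"
      using nu_left[OF Ps.m_inv_closed[OF pi_prop(1)[OF q]]] q xQ by simp
    finally show ?case using nc xc by (simp add: m_assoc)
  qed
  have xp: "x [^] (p ^ a) = \<one>"
    using conj_pow[OF g zc, of "p ^ a"] S_pow[OF P_S[OF z]] g by (simp add: x_def)
  have per: "\<forall>w\<in>N. (\<sigma> ^^ (p ^ a)) w = w" using iter xp nu_N_id N_car by simp
  obtain n0 where n0: "n0 \<in> N" "\<sigma> n0 = n0"
    using perm_fixed_point[OF N_props(2) sN per pr N_props(3)] by blast
  have n0c: "n0 \<in> carrier H" using n0 N_car by blast
  have q0: "n0 \<otimes> x \<in> Q" using nxQ n0 by blast
  have pc: "pi (n0 \<otimes> x) \<in> carrier H" using pi_car q0 by blast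
  have "inv (pi (n0 \<otimes> x)) \<otimes> (n0 \<otimes> x) = n0" using n0 by (simp add: \<sigma>_def nu_def)
  hence "pi (n0 \<otimes> x) \<otimes> (inv (pi (n0 \<otimes> x)) \<otimes> (n0 \<otimes> x)) \<otimes> inv n0 = pi (n0 \<otimes> x) \<otimes> n0 \<otimes> inv n0"
    by simp
  hence "n0 \<otimes> x \<otimes> inv n0 = pi (n0 \<otimes> x)" using pc n0c xc by (simp add: m_assoc)
  hence "inv (inv n0) \<otimes> x \<otimes> inv n0 \<in> P" using pi_prop(1)[OF q0] n0c by simp
  moreover have "inv n0 \<in> N" using n0 by simp
  ultimately show ?thesis unfolding x_def by blast
qed

lemma W_central: "z \<in> W H S \<Longrightarrow> z \<in> centre H S"
proof -
  assume z: "z \<in> W H S"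
  hence zS: "z \<in> S" and wc: "\<forall>g\<in>carrier H. inv g \<otimes> z \<otimes> g \<in> S \<longrightarrow> inv g \<otimes> z \<otimes> g = z"
    by (auto simp: W_def weakly_closed_def)
  have "z \<otimes> x = x \<otimes> z" if x: "x \<in> S" for x
  proof -
    have xc: "x \<in> carrier H" "z \<in> carrier H" using x zS S_car by auto
    have "inv x \<otimes> z \<otimes> x \<in> S" using x zS by simp
    hence e: "inv x \<otimes> z \<otimes> x = z" using wc xc by blast
    have "x \<otimes> (inv x \<otimes> z \<otimes> x) = z \<otimes> x" using xc by (simp add: m_assoc)
    thus ?thesis using e by simp
  qed
  thus ?thesis using zS by (simp add: centre_def)
qed

definition W' where "W' = {z \<in> centre H S. \<forall>g\<in>carrier H. phi g z = z}"

lemma W_eq: "W H S = W'"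
proof
  show "W H S \<subseteq> W'"
  proof
    fix z assume z: "z \<in> W H S"
    have zc: "z \<in> centre H S" using W_central z by blast
    have zP: "z \<in> P" using zc centre_P by blast
    have wc: "\<forall>g\<in>carrier H. inv g \<otimes> z \<otimes> g \<in> S \<longrightarrow> inv g \<otimes> z \<otimes> g = z"
      using z by (auto simp: W_def weakly_closed_def)
    have "phi g z = z" if g: "g \<in> carrier H" for g
    proof -
      obtain m where m: "m \<in> N" "inv m \<otimes> (inv g \<otimes> z \<otimes> g) \<otimes> m \<in> P"
        using conj_into_P[OF zP g] by blast
      have c: "m \<in> carrier H" "z \<in> carrier H" using m zP N_car P_car by auto
      have e: "inv (g \<otimes> m) \<otimes> z \<otimes> (g \<otimes> m) = inv m \<otimes> (inv g \<otimes> z \<otimes> g) \<otimes> m"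
        using g c by (simp add: inv_mult_group m_assoc)
      have gm: "g \<otimes> m \<in> carrier H" using g c by simp
      have inP: "inv (g \<otimes> m) \<otimes> z \<otimes> (g \<otimes> m) \<in> P" using e m by simp
      hence "inv (g \<otimes> m) \<otimes> z \<otimes> (g \<otimes> m) = z" using wc gm P_S by blast
      hence "phi (g \<otimes> m) z = z" using phi_conjP[OF gm zP inP] by simp
      moreover have "phi (g \<otimes> m) z = phi g z"
        using phi_comp[OF g c(1) zP] phi_N[OF m(1) phi_P[OF g zP]] by simp
      ultimately show ?thesis by simp
    qed
    thus "z \<in> W'" using zc by (simp add: W'_def)
  qed
next
  show "W' \<subseteq> W H S"
  proof
    fix z assume z: "z \<in> W'"
    have zc: "z \<in> centre H S" and fx: "\<forall>g\<in>carrier H. phi g z = z" using z by (auto simp: W'_def)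
    have zP: "z \<in> P" using zc centre_P by blast
    have "inv g \<otimes> z \<otimes> g = z" if g: "g \<in> carrier H" and inS: "inv g \<otimes> z \<otimes> g \<in> S" for g
    proof -
      have "inv g \<otimes> z \<otimes> g \<in> Q" using conj_Q[OF g P_Q[OF zP]] .
      hence inP: "inv g \<otimes> z \<otimes> g \<in> P" using inS P_def by simp
      show ?thesis using phi_conjP[OF g zP inP] fx g by simp
    qed
    thus "z \<in> W H S" using zP P_S by (auto simp: W_def weakly_closed_def)
  qed
qed

end


lemma (in comm_monoid) finprod_hom_gen:
  assumes "finite I" "f \<in> I \<rightarrow> carrier G" "h \<in> carrier G \<rightarrow> carrier G" "h \<one> = \<one>"
    "\<And>x y. x \<in> carrier G \<Longrightarrow> y \<in> carrier G \<Longrightarrow> h (x \<otimes> y) = h x \<otimes> h y"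
  shows "h (finprod G f I) = finprod G (\<lambda>i. h (f i)) I"
  using assms(1,2)
proof (induction I rule: finite_induct)
  case empty thus ?case using assms(4) by simp
next
  case (insert i I)
  have fI: "f \<in> I \<rightarrow> carrier G" and fi: "f i \<in> carrier G" using insert.prems by auto
  have hfI: "(\<lambda>i. h (f i)) \<in> I \<rightarrow> carrier G" and hfi: "h (f i) \<in> carrier G"
    using fI fi assms(3) by auto
  have "h (finprod G f (insert i I)) = h (f i \<otimes> finprod G f I)"
    using finprod_insert[OF insert.hyps fI fi] by simp
  also have "\<dots> = h (f i) \<otimes> h (finprod G f I)" using assms(5) fi fI by simp
  also have "\<dots> = h (f i) \<otimes> finprod G (\<lambda>i. h (f i)) I" using insert.IH[OF fI] by simp
  also have "\<dots> = finprod G (\<lambda>i. h (f i)) (insert i I)"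
    using finprod_insert[OF insert.hyps hfI hfi] by simp
  finally show ?case .
qed

lemma (in group) centre_sg:
  assumes K: "subgroup K G" shows "subgroup (centre G K) G"
proof -
  interpret K: subgroup K G by fact
  show ?thesis
  proof (rule subgroupI)
    show "centre G K \<subseteq> carrier G" by (auto simp: centre_def)
    show "centre G K \<noteq> {}" by (auto simp: centre_def intro!: exI[of _ \<one>])
  next
    fix z assume z: "z \<in> centre G K"
    have zc: "z \<in> carrier G" "z \<in> K" using z by (auto simp: centre_def)
    have "inv z \<otimes> x = x \<otimes> inv z" if x: "x \<in> K" for x
    proof -
      have xc: "x \<in> carrier G" using x by simp
      have "z \<otimes> x = x \<otimes> z" using z x by (auto simp: centre_def)
      hence "inv z \<otimes> (z \<otimes> x) \<otimes> inv z = inv z \<otimes> (x \<otimes> z) \<otimes> inv z" by simp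
      thus ?thesis using xc zc by (simp add: m_assoc)
    qed
    thus "inv z \<in> centre G K" using zc by (auto simp: centre_def)
  next
    fix y z assume y: "y \<in> centre G K" and z: "z \<in> centre G K"
    have c: "y \<in> carrier G" "z \<in> carrier G" "y \<in> K" "z \<in> K" using y z by (auto simp: centre_def)
    have "y \<otimes> z \<otimes> x = x \<otimes> (y \<otimes> z)" if x: "x \<in> K" for x
    proof -
      have xc: "x \<in> carrier G" using x by simp
      have "y \<otimes> z \<otimes> x = y \<otimes> (x \<otimes> z)" using z x c xc by (auto simp: centre_def m_assoc)
      also have "\<dots> = (y \<otimes> x) \<otimes> z" using c xc by (simp add: m_assoc)
      also have "\<dots> = (x \<otimes> y) \<otimes> z" using y x by (auto simp: centre_def)
      finally show ?thesis using c xc by (simp add: m_assoc)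
    qed
    thus "y \<otimes> z \<in> centre G K" using c by (auto simp: centre_def)
  qed
qed

context ctx begin

interpretation Nn: normal N H using N_props by blast
interpretation Qn: normal Q H using Q_normal by blast
interpretation Ps: subgroup P H using P_sg by blast
interpretation Ss: subgroup S H using S_sg by blast

abbreviation ZP where "ZP \<equiv> centre H P"

lemma ZP_sg: "subgroup ZP H" using centre_sg P_sg by blast

lemma ZS_sg: "subgroup (centre H S) H" using centre_sg S_sg by blast

lemma A_comm: "comm_group (H\<lparr>carrier := ZP\<rparr>)"
proof -
  interpret AG: group "H\<lparr>carrier := ZP\<rparr>" using ZP_sg subgroup_imp_group by blast
  show ?thesis
  proof (rule AG.group_comm_groupI)
    fix x y assume x: "x \<in> carrier (H\<lparr>carrier := ZP\<rparr>)" and y: "y \<in> carrier (H\<lparr>carrier := ZP\<rparr>)"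
    have "y \<in> P" using y by (simp add: centre_def)
    moreover have "\<forall>v\<in>P. x \<otimes> v = v \<otimes> x" using x by (simp add: centre_def)
    ultimately have "x \<otimes> y = y \<otimes> x" by blast
    thus "x \<otimes>\<^bsub>H\<lparr>carrier := ZP\<rparr>\<^esub> y = y \<otimes>\<^bsub>H\<lparr>carrier := ZP\<rparr>\<^esub> x" by simp
  qed
qed

interpretation A: comm_group "H\<lparr>carrier := ZP\<rparr>" by (rule A_comm)

lemma ZP_P: "x \<in> ZP \<Longrightarrow> x \<in> P" by (simp add: centre_def)

lemma ZS_ZP: "z \<in> centre H S \<Longrightarrow> z \<in> ZP"
  using centre_P P_S by (auto simp: centre_def)

lemma phi_1: "g \<in> carrier H \<Longrightarrow> phi g \<one> = \<one>"
  unfolding phi_def using pi_N Nn.one_closed by simp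

lemma phi_ZP: assumes g: "g \<in> carrier H" and c: "c \<in> ZP" shows "phi g c \<in> ZP"
proof -
  have cP: "c \<in> P" using c ZP_P by blast
  have "phi g c \<otimes> y = y \<otimes> phi g c" if y: "y \<in> P" for y
  proof -
    have y': "phi (inv g) y \<in> P" using phi_P y g by simp
    have "phi g c \<otimes> y = phi g c \<otimes> phi g (phi (inv g) y)" using phi_inv_cancel g y by simp
    also have "\<dots> = phi g (c \<otimes> phi (inv g) y)" using phi_mult[OF g cP y'] by simp
    also have "c \<otimes> phi (inv g) y = phi (inv g) y \<otimes> c" using c y' by (auto simp: centre_def)
    also have "phi g (phi (inv g) y \<otimes> c) = phi g (phi (inv g) y) \<otimes> phi g c" using phi_mult[OF g y' cP] by simp
    also have "\<dots> = y \<otimes> phi g c" using phi_inv_cancel g y by simp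
    finally show ?thesis .
  qed
  thus ?thesis using phi_P[OF g cP] by (simp add: centre_def)
qed

lemma phi_indep:
  assumes u: "u \<in> centre H S" and t: "t \<in> carrier H" and t': "t' \<in> S #> t"
  shows "phi t' u = phi t u"
proof -
  obtain s where s: "s \<in> S" "t' = s \<otimes> t" using t' by (auto simp: r_coset_def)
  have sc: "s \<in> carrier H" using s S_car by blast
  have aP: "u \<in> P" using u centre_P by blast
  have ac: "u \<in> carrier H" using aP P_car by blast
  have "inv s \<otimes> u \<otimes> s = u"
  proof -
    have "u \<otimes> s = s \<otimes> u" using u s by (auto simp: centre_def)
    thus ?thesis using sc ac by (simp add: m_assoc)
  qed
  hence "phi s u = u" using phi_conjP[OF sc aP] aP by simp
  thus ?thesis using phi_comp[OF sc t aP] s by simp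
qed

definition rep where "rep C = (SOME t. t \<in> C)"

lemma rep_in: assumes "C \<in> rcosets S" shows "rep C \<in> C" "rep C \<in> carrier H" "C = S #> rep C"
proof -
  obtain t where t: "t \<in> carrier H" "C = S #> t" using assms by (auto simp: RCOSETS_def)
  have "t \<in> C" using t rcos_self S_sg by blast
  thus "rep C \<in> C" unfolding rep_def by (rule someI)
  thus "rep C \<in> carrier H" using t r_coset_subset_G Ss.subset by blast
  show "C = S #> rep C" using repr_independence[OF _ t(1) S_sg] \<open>rep C \<in> C\<close> t by simp
qed

definition tau where "tau u = finprod (H\<lparr>carrier := ZP\<rparr>) (\<lambda>C. phi (rep C) u) (rcosets S)"

lemma fin_rcosets: "finite (rcosets S)"
  by (rule finite_subset[OF rcosets_subset_PowG[OF S_sg]]) (simp add: fin)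

lemma F_in: "u \<in> ZP \<Longrightarrow> (\<lambda>C. phi (rep C) u) \<in> rcosets S \<rightarrow> ZP"
  using phi_ZP rep_in(2) by blast

lemma tau_ZP: "u \<in> ZP \<Longrightarrow> tau u \<in> ZP"
  using A.finprod_closed[of "\<lambda>C. phi (rep C) u" "rcosets S"] F_in by (simp add: tau_def)

lemma rcos_shift:
  assumes C: "C \<in> rcosets S" and g: "g \<in> carrier H"
  shows "C #> g \<in> rcosets S" "C #> g = S #> (rep C \<otimes> g)"
proof -
  have "C #> g = S #> rep C #> g" using rep_in(3)[OF C] by simp
  also have "\<dots> = S #> (rep C \<otimes> g)" using coset_mult_assoc Ss.subset rep_in(2)[OF C] g by simp
  finally show e: "C #> g = S #> (rep C \<otimes> g)" .
  show "C #> g \<in> rcosets S" using e rep_in(2)[OF C] g by (auto simp: RCOSETS_def)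
qed

lemma shift_bij: assumes g: "g \<in> carrier H"
  shows "(\<lambda>C. C #> g) ` (rcosets S) = rcosets S" "inj_on (\<lambda>C. C #> g) (rcosets S)"
proof -
  show inj: "inj_on (\<lambda>C. C #> g) (rcosets S)"
  proof (rule inj_onI)
    fix C D assume C: "C \<in> rcosets S" and D: "D \<in> rcosets S" and e: "C #> g = D #> g"
    have Cs: "C \<subseteq> carrier H" and Ds: "D \<subseteq> carrier H"
      using C D rcosets_part_G[OF S_sg] by auto
    have "C = C #> g #> inv g" using coset_mult_assoc[OF Cs g] Cs g by simp
    also have "\<dots> = D #> g #> inv g" using e by simp
    also have "\<dots> = D" using coset_mult_assoc[OF Ds g] Ds g by simp
    finally show "C = D" .
  qed
  have "(\<lambda>C. C #> g) ` (rcosets S) \<subseteq> rcosets S" using rcos_shift(1)[OF _ g] by auto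
  thus "(\<lambda>C. C #> g) ` (rcosets S) = rcosets S" by (rule endo_inj_surj[OF fin_rcosets _ inj])
qed

lemma tau_fixed: assumes u: "u \<in> centre H S" and g: "g \<in> carrier H" shows "phi g (tau u) = tau u"
proof -
  have aZ: "u \<in> ZP" using ZS_ZP u by blast
  have "phi g (tau u) = finprod (H\<lparr>carrier := ZP\<rparr>) (\<lambda>C. phi g (phi (rep C) u)) (rcosets S)"
    unfolding tau_def
  proof (rule A.finprod_hom_gen[OF fin_rcosets])
    show "(\<lambda>C. phi (rep C) u) \<in> rcosets S \<rightarrow> carrier (H\<lparr>carrier := ZP\<rparr>)" using F_in aZ by simp
    show "phi g \<in> carrier (H\<lparr>carrier := ZP\<rparr>) \<rightarrow> carrier (H\<lparr>carrier := ZP\<rparr>)" using phi_ZP g by simp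
    show "phi g \<one>\<^bsub>H\<lparr>carrier := ZP\<rparr>\<^esub> = \<one>\<^bsub>H\<lparr>carrier := ZP\<rparr>\<^esub>" using phi_1 g by simp
    show "\<And>x y. x \<in> carrier (H\<lparr>carrier := ZP\<rparr>) \<Longrightarrow> y \<in> carrier (H\<lparr>carrier := ZP\<rparr>) \<Longrightarrow>
      phi g (x \<otimes>\<^bsub>H\<lparr>carrier := ZP\<rparr>\<^esub> y) = phi g x \<otimes>\<^bsub>H\<lparr>carrier := ZP\<rparr>\<^esub> phi g y"
      using phi_mult g ZP_P by simp
  qed
  also have "\<dots> = finprod (H\<lparr>carrier := ZP\<rparr>) (\<lambda>C. phi (rep (C #> g)) u) (rcosets S)"
  proof (rule A.finprod_cong')
    show "rcosets S = rcosets S" ..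
    show "(\<lambda>C. phi (rep (C #> g)) u) \<in> rcosets S \<rightarrow> carrier (H\<lparr>carrier := ZP\<rparr>)"
      using F_in[OF aZ] rcos_shift(1)[OF _ g] by auto
    fix C assume C: "C \<in> rcosets S"
    have "phi g (phi (rep C) u) = phi (rep C \<otimes> g) u"
      using phi_comp[OF rep_in(2)[OF C] g] u centre_P by (simp add: subset_iff)
    also have "\<dots> = phi (rep (C #> g)) u"
    proof -
      have rc: "rep C \<otimes> g \<in> carrier H" using rep_in(2)[OF C] g by simp
      have "rep (C #> g) \<in> S #> (rep C \<otimes> g)"
        using rep_in(1)[OF rcos_shift(1)[OF C g]] rcos_shift(2)[OF C g] by simp
      from phi_indep[OF u rc this] show ?thesis by simp
    qed
    finally show "phi g (phi (rep C) u) = phi (rep (C #> g)) u" .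
  qed
  also have "\<dots> = finprod (H\<lparr>carrier := ZP\<rparr>) (\<lambda>C. phi (rep C) u) ((\<lambda>C. C #> g) ` (rcosets S))"
    using A.finprod_reindex[of "\<lambda>C. phi (rep C) u" "\<lambda>C. C #> g" "rcosets S"] shift_bij[OF g] F_in[OF aZ]
    by simp
  also have "\<dots> = tau u" using shift_bij[OF g] by (simp add: tau_def)
  finally show ?thesis .
qed

end


context ctx begin

interpretation Nn: normal N H using N_props by blast
interpretation Qn: normal Q H using Q_normal by blast
interpretation Ps: subgroup P H using P_sg by blast
interpretation Ss: subgroup S H using S_sg by blast
interpretation ZS: subgroup "centre H S" H using ZS_sg .
interpretation A: comm_group "H\<lparr>carrier := ZP\<rparr>" by (rule A_comm)

lemma ZS_S: "z \<in> centre H S \<Longrightarrow> z \<in> S" by (simp add: centre_def)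

lemma sub_pow_closed: "subgroup K H \<Longrightarrow> x \<in> K \<Longrightarrow> x [^] (n::nat) \<in> K"
  by (induction n) (auto simp: subgroup.one_closed subgroup.m_closed)

lemma W'_sub: "W' \<subseteq> centre H S" by (auto simp: W'_def)

lemma W'_sg: "subgroup W' H"
proof (rule subgroupI)
  show "W' \<subseteq> carrier H" using W'_sub ZS.subset by blast
  have "\<one> \<in> W'" using phi_1 ZS.one_closed by (simp add: W'_def)
  thus "W' \<noteq> {}" by blast
next
  fix z assume z: "z \<in> W'"
  have zc: "z \<in> centre H S" and fx: "\<forall>g\<in>carrier H. phi g z = z" using z by (auto simp: W'_def)
  have zP: "z \<in> P" "inv z \<in> P" using zc centre_P by auto
  have zcar: "z \<in> carrier H" using zP P_car by blast
  have "phi g (inv z) = inv z" if g: "g \<in> carrier H" for g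
  proof -
    have "phi g (inv z) \<otimes> phi g z = phi g (inv z \<otimes> z)" using phi_mult[OF g zP(2) zP(1)] by simp
    also have "\<dots> = \<one>" using phi_1 g zcar by simp
    finally have "phi g (inv z) \<otimes> z = \<one>" using fx g by simp
    hence "inv z = phi g (inv z)" using inv_equality phi_car[OF g zP(2)] zcar by blast
    thus ?thesis by simp
  qed
  thus "inv z \<in> W'" using zc by (simp add: W'_def)
next
  fix y z assume y: "y \<in> W'" and z: "z \<in> W'"
  have c: "y \<in> centre H S" "z \<in> centre H S" using y z by (auto simp: W'_def)
  have P: "y \<in> P" "z \<in> P" using c centre_P by auto
  have "phi g (y \<otimes> z) = y \<otimes> z" if g: "g \<in> carrier H" for g
    using phi_mult[OF g P] y z g by (simp add: W'_def)
  thus "y \<otimes> z \<in> W'" using c by (simp add: W'_def)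
qed

lemma tau_W': assumes u: "u \<in> centre H S" shows "tau u \<in> W'"
proof -
  have uZ: "u \<in> ZP" using ZS_ZP u by blast
  have tZ: "tau u \<in> ZP" using tau_ZP uZ by blast
  have tP: "tau u \<in> P" using tZ ZP_P by blast
  have tc: "tau u \<in> carrier H" using tP P_car by blast
  have "tau u \<otimes> s = s \<otimes> tau u" if s: "s \<in> S" for s
  proof -
    have sc: "s \<in> carrier H" using s S_car by blast
    have "inv s \<otimes> tau u \<otimes> s \<in> S" using s P_S[OF tP] by simp
    moreover have "inv s \<otimes> tau u \<otimes> s \<in> Q" using conj_Q[OF sc P_Q[OF tP]] .
    ultimately have inP: "inv s \<otimes> tau u \<otimes> s \<in> P" using P_def by simp
    have "inv s \<otimes> tau u \<otimes> s = tau u"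
      using phi_conjP[OF sc tP inP] tau_fixed[OF u sc] by simp
    hence "s \<otimes> (inv s \<otimes> tau u \<otimes> s) = s \<otimes> tau u" by simp
    thus ?thesis using sc tc by (simp add: m_assoc)
  qed
  hence "tau u \<in> centre H S" using P_S[OF tP] by (simp add: centre_def)
  thus ?thesis using tau_fixed[OF u] by (simp add: W'_def)
qed

lemma tau_mult: assumes u: "u \<in> centre H S" and v: "v \<in> centre H S"
  shows "tau (u \<otimes> v) = tau u \<otimes> tau v"
proof -
  have uZ: "u \<in> ZP" and vZ: "v \<in> ZP" using ZS_ZP u v by auto
  have uP: "u \<in> P" and vP: "v \<in> P" using uZ vZ ZP_P by auto
  have "tau (u \<otimes> v) = finprod (H\<lparr>carrier := ZP\<rparr>)
      (\<lambda>C. phi (rep C) u \<otimes>\<^bsub>H\<lparr>carrier := ZP\<rparr>\<^esub> phi (rep C) v) (rcosets S)"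
    unfolding tau_def
  proof (rule A.finprod_cong')
    show "rcosets S = rcosets S" ..
    show "(\<lambda>C. phi (rep C) u \<otimes>\<^bsub>H\<lparr>carrier := ZP\<rparr>\<^esub> phi (rep C) v) \<in> rcosets S \<rightarrow> carrier (H\<lparr>carrier := ZP\<rparr>)"
      using F_in[OF uZ] F_in[OF vZ] A.m_closed by (auto simp del: A.m_closed)
    fix C assume "C \<in> rcosets S"
    thus "phi (rep C) (u \<otimes> v) = phi (rep C) u \<otimes>\<^bsub>H\<lparr>carrier := ZP\<rparr>\<^esub> phi (rep C) v"
      using phi_mult[OF rep_in(2) uP vP] by simp
  qed
  also have "\<dots> = tau u \<otimes>\<^bsub>H\<lparr>carrier := ZP\<rparr>\<^esub> tau v"
    unfolding tau_def using A.finprod_multf F_in[OF uZ] F_in[OF vZ] by simp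
  finally show ?thesis by simp
qed

definition m where "m = card (rcosets S)"

lemma tau_pow: assumes w: "w \<in> W'" shows "tau w = w [^] m"
proof -
  have wc: "w \<in> centre H S" and fx: "\<forall>g\<in>carrier H. phi g w = w" using w by (auto simp: W'_def)
  have wZ: "w \<in> ZP" using ZS_ZP wc by blast
  have "tau w = finprod (H\<lparr>carrier := ZP\<rparr>) (\<lambda>C. w) (rcosets S)"
    unfolding tau_def
  proof (rule A.finprod_cong')
    show "rcosets S = rcosets S" ..
    show "(\<lambda>C. w) \<in> rcosets S \<rightarrow> carrier (H\<lparr>carrier := ZP\<rparr>)" using wZ by simp
    fix C assume "C \<in> rcosets S"
    thus "phi (rep C) w = w" using fx rep_in(2) by blast
  qed
  also have "\<dots> = w [^]\<^bsub>H\<lparr>carrier := ZP\<rparr>\<^esub> m" using A.finprod_const wZ by (simp add: m_def)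
  also have "\<dots> = w [^] m" by (simp add: nat_pow_consistent[symmetric])
  finally show ?thesis .
qed

lemma m_coprime: "\<not> p dvd m"
proof
  assume "p dvd m"
  then obtain r where r: "m = p * r" by (auto elim: dvdE)
  have "m * card S = order H" using lagrange[OF S_sg] by (simp add: m_def)
  hence "order H = p ^ Suc a * r" using r card_S by (simp add: mult_ac)
  hence "p ^ Suc a dvd order H" by simp
  moreover have "\<not> is_unit p" using p_gt1 by simp
  ultimately have "Suc a \<le> multiplicity p (order H)"
    using power_dvd_iff_le_multiplicity[OF order_ne0] by blast
  thus False by (simp add: a_def)
qed

lemma pow_m_one: assumes w: "w \<in> S" and e: "w [^] m = \<one>" shows "w = \<one>"
proof -
  have wc: "w \<in> carrier H" using w S_car by blast
  have "ord w dvd m" using e pow_eq_id[OF wc] by simp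
  moreover have "ord w dvd p ^ a" using S_pow[OF w] pow_eq_id[OF wc] by simp
  moreover have "coprime m (p ^ a)" using prime_imp_power_coprime[OF pr m_coprime] .
  ultimately have "is_unit (ord w)" using coprime_common_divisor by blast
  hence "ord w = 1" by simp
  hence e1: "w [^] (1::nat) = \<one>" using pow_eq_id[OF wc, of 1] by simp
  have "w = w [^] (1::nat)" using wc by simp
  thus ?thesis using e1 by simp
qed

lemma pow_surj: "(\<lambda>w. w [^] m) ` W' = W'"
proof -
  interpret Wg: subgroup W' H using W'_sg .
  have finW: "finite W'" using Wg.subset fin finite_subset by blast
  have img: "(\<lambda>w. w [^] m) ` W' \<subseteq> W'" using sub_pow_closed[OF W'_sg] by blast
  have inj: "inj_on (\<lambda>w. w [^] m) W'"
  proof (rule inj_onI)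
    fix x y assume x: "x \<in> W'" and y: "y \<in> W'" and e: "x [^] m = y [^] m"
    have xc: "x \<in> carrier H" "y \<in> carrier H" using x y Wg.subset by auto
    have xz: "x \<in> centre H S" using x W'_sub by blast
    have "y \<in> centre H S" using y W'_sub by blast
    hence "inv y \<in> centre H S" by simp
    hence iyS: "inv y \<in> S" using ZS_S by blast
    have comm: "x \<otimes> inv y = inv y \<otimes> x" using xz iyS by (simp add: centre_def)
    have "(x \<otimes> inv y) [^] m = x [^] m \<otimes> inv y [^] m" using pow_mult_distrib[OF comm] xc by simp
    also have "\<dots> = y [^] m \<otimes> inv (y [^] m)" using e nat_pow_inv xc by simp
    also have "\<dots> = \<one>" using xc by simp
    finally have "(x \<otimes> inv y) [^] m = \<one>" .
    moreover have "x \<otimes> inv y \<in> S"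
    proof -
      have "x \<in> S" using xz ZS_S by blast
      thus ?thesis using iyS by simp
    qed
    ultimately have "x \<otimes> inv y = \<one>" using pow_m_one by blast
    hence "x \<otimes> inv y \<otimes> y = y" using xc by simp
    thus "x = y" using xc by (simp add: m_assoc)
  qed
  show ?thesis by (rule endo_inj_surj[OF finW img inj])
qed

lemma tau_one: "tau \<one> = \<one>"
proof -
  have "\<one> \<in> W'" using W'_sg subgroup.one_closed by blast
  thus ?thesis using tau_pow by simp
qed

theorem main:
  "\<exists>K. subgroup K H \<and> K \<subseteq> centre H S \<and> W H S \<inter> K = {\<one>} \<and> W H S <#> K = centre H S"
proof -
  define K where "K = {k \<in> centre H S. tau k = \<one>}"
  have Ksub: "K \<subseteq> centre H S" by (auto simp: K_def)
  have Ksg: "subgroup K H"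
  proof (rule subgroupI)
    show "K \<subseteq> carrier H" using Ksub ZS.subset by blast
    have "\<one> \<in> K" using tau_one ZS.one_closed by (simp add: K_def)
    thus "K \<noteq> {}" by blast
  next
    fix k assume k: "k \<in> K"
    have kc: "k \<in> centre H S" "tau k = \<one>" using k by (auto simp: K_def)
    have ik: "inv k \<in> centre H S" using kc by simp
    have "tau (inv k) \<otimes> tau k = tau (inv k \<otimes> k)" using tau_mult[OF ik kc(1)] by simp
    also have "\<dots> = \<one>" using kc tau_one by simp
    finally have "tau (inv k) = \<one>"
      using kc tau_ZP[OF ZS_ZP[OF ik]] ZP_P P_car by simp
    thus "inv k \<in> K" using ik by (simp add: K_def)
  next
    fix k l assume k: "k \<in> K" and l: "l \<in> K"
    thus "k \<otimes> l \<in> K" using tau_mult by (auto simp: K_def)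
  qed
  have WK: "W H S \<inter> K = {\<one>}"
  proof
    show "W H S \<inter> K \<subseteq> {\<one>}"
    proof
      fix w assume w: "w \<in> W H S \<inter> K"
      hence wW: "w \<in> W'" and tw: "tau w = \<one>" using W_eq by (auto simp: K_def)
      have "w [^] m = \<one>" using tau_pow[OF wW] tw by simp
      moreover have "w \<in> S" using wW W'_sub ZS_S by blast
      ultimately show "w \<in> {\<one>}" using pow_m_one by blast
    qed
    have "\<one> \<in> W'" by (rule subgroup.one_closed[OF W'_sg])
    moreover have "\<one> \<in> K" by (rule subgroup.one_closed[OF Ksg])
    ultimately show "{\<one>} \<subseteq> W H S \<inter> K" using W_eq by simp
  qed
  have prod: "W H S <#> K = centre H S"
  proof
    show "W H S <#> K \<subseteq> centre H S"
    proof
      fix x assume "x \<in> W H S <#> K"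
      then obtain w k where wk: "w \<in> W H S" "k \<in> K" "x = w \<otimes> k" by (auto simp: set_mult_def)
      have "w \<in> W'" using wk(1) W_eq by simp
      hence "w \<in> centre H S" using W'_sub by blast
      moreover have "k \<in> centre H S" using wk(2) Ksub by blast
      ultimately have "w \<in> centre H S" "k \<in> centre H S" by auto
      thus "x \<in> centre H S" using wk by simp
    qed
  next
    show "centre H S \<subseteq> W H S <#> K"
    proof
      fix u assume u: "u \<in> centre H S"
      have "tau u \<in> W'" using tau_W'[OF u] .
      hence "tau u \<in> (\<lambda>w. w [^] m) ` W'" using pow_surj by simp
      then obtain w where w: "w \<in> W'" "w [^] m = tau u" by (auto simp: image_iff)
      have wc: "w \<in> centre H S" using w W'_sub by blast
      have wcar: "w \<in> carrier H" "u \<in> carrier H" using wc u ZS.subset by auto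
      define k where "k = inv w \<otimes> u"
      have kc: "k \<in> centre H S" using wc u by (simp add: k_def)
      have iw: "inv w \<in> W'" by (rule subgroup.m_inv_closed[OF W'_sg w(1)])
      have "tau k = tau (inv w) \<otimes> tau u" using tau_mult wc u by (simp add: k_def)
      also have "tau (inv w) = inv w [^] m" using tau_pow[OF iw] .
      also have "\<dots> = inv (tau u)" using w nat_pow_inv wcar by simp
      finally have "tau k = \<one>" using tau_ZP[OF ZS_ZP[OF u]] ZP_P P_car by simp
      hence "k \<in> K" using kc by (simp add: K_def)
      moreover have "u = w \<otimes> k" using wcar by (simp add: k_def m_assoc)
      moreover have "w \<in> W H S" using w W_eq by simp
      ultimately show "u \<in> W H S <#> K" by (auto simp: set_mult_def)
    qed
  qed
  show ?thesis using Ksg Ksub WK prod by blast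
qed

end

theorem proposition2p2:
  fixes H :: "('a, 'b) monoid_scheme" and p :: nat and S :: "'a set"
  assumes "group H" and "finite (carrier H)" and "Factorial_Ring.prime p"
    and "sylow_subgroup H p S"
    and "centre H S \<subseteq> O_p'p H p"
  shows "\<exists>K. subgroup K H \<and> K \<subseteq> centre H S \<and> W H S \<inter> K = {\<one>\<^bsub>H\<^esub>}
             \<and> W H S <#>\<^bsub>H\<^esub> K = centre H S"
proof -
  interpret ctx H p S "O_p' H p" "O_p'p H p" "S \<inter> O_p'p H p"
    using assms by (simp add: ctx_def ctx_axioms_def)
  show ?thesis by (rule main)
qed

end
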